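(* Let $a,b,c,d,P_{\max}>0$, and assume both frontier curves are convex, i.e. $Q_1\le0$ and $Q_2\le0$. Define the points $A=(0,\log_2(1+cP_{\max}))$ and $C=(\log_2(1+aP_{\max}),0)$, and let $\gamma=\log_2(1+cP_{\max})/\log_2(1+aP_{\max})$. Then operating via TDM is optimal, i.e. the convex hull of the power-control rate region equals the triangle with vertices $(0,0),A,C$, if $$\frac{(1+cP_{\max})(1+dP_{\max})}{1+cP_{\max}+dP_{\max}}\ \ge\ \left(\frac{1+aP_{\max}+bP_{\max}}{1+bP_{\max}}\right)^{\gamma}.$$ This inequality is equivalent to the point $B=(R_1(P_{\max},P_{\max}),R_2(P_{\max},P_{\max}))$ lying on or below the segment joining $A$ and $C$.
   Context: The channel power gains are normalized by the noise variance: $a$ (direct gain of user 1), $b$ (interference gain from transmitter 2 at receiver 1), $c$ (direct gain of user 2), $d$ (interference gain from transmitter 1 at receiver 2). The rates are $R_1(P_1,P_2)=\log_2\!\left(1+\frac{aP_1}{1+bP_2}\right)$ and $R_2(P_1,P_2)=\log_2\!\left(1+\frac{cP_2}{1+dP_1}\right)$, with $P_1,P_2\in[0,P_{\max}]$. The power-control rate region is $\{(r_1,r_2)\in\mathbb R^2_{\ge0}: \exists (P_1,P_2)\in[0,P_{\max}]^2,\ r_1\le R_1(P_1,P_2),\ r_2\le R_2(P_1,P_2)\}$. TDM (time division multiplexing) means time-sharing between $A$ (only user 2 transmits, at full power) and $C$ (only user 1 transmits, at full power). The thresholds are defined with $\alpha=d(1+bP_{\max})$ and $\beta=b(1+dP_{\max})$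 as $$Q_1=\frac{\Re\sqrt{(a-\alpha)(a-\alpha+acP_{\max})}-\alpha}{ad},\qquad Q_2=\frac{\Re\sqrt{(c-\beta)(c-\beta+acP_{\max})}-\beta}{cb}.$$ $Q_1\le 0$ means that the curve $\{(R_1(P_1,P_{\max}),R_2(P_1,P_{\max})):P_1\in[0,P_{\max}]\}$ is convex, viewed as the graph of $r_2$ as a function of $r_1$. $Q_2\le0$ means that the curve $\{(R_1(P_{\max},P_2),R_2(P_{\max},P_2)):P_2\in[0,P_{\max}]\}$ is convex. *)

theory Defs
  imports "HOL-Analysis.Analysis"
begin

definition R1 :: "real \<Rightarrow> real \<Rightarrow> real \<Rightarrow> real \<Rightarrow> real \<Rightarrow> real \<Rightarrow> real" where
  "R1 a b c d P1 P2 = log 2 (1 + a * P1 / (1 + b * P2))"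

definition R2 :: "real \<Rightarrow> real \<Rightarrow> real \<Rightarrow> real \<Rightarrow> real \<Rightarrow> real \<Rightarrow> real" where
  "R2 a b c d P1 P2 = log 2 (1 + c * P2 / (1 + d * P1))"

definition rate_region :: "real \<Rightarrow> real \<Rightarrow> real \<Rightarrow> real \<Rightarrow> real \<Rightarrow> (real \<times> real) set" where
  "rate_region a b c d Pmax = {(r1, r2). 0 \<le> r1 \<and> 0 \<le> r2 \<and>
     (\<exists>P1 P2. 0 \<le> P1 \<and> P1 \<le> Pmax \<and> 0 \<le> P2 \<and> P2 \<le> Pmax \<and>
        r1 \<le> R1 a b c d P1 P2 \<and> r2 \<le> R2 a b c d P1 P2)}"

definition Q1 :: "real \<Rightarrow> real \<Rightarrow> real \<Rightarrow> real \<Rightarrow> real \<Rightarrow> real" where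
  "Q1 a b c d Pmax = (let \<alpha> = d * (1 + b * Pmax) in
     (Re (csqrt (complex_of_real ((a - \<alpha>) * (a - \<alpha> + a * c * Pmax)))) - \<alpha>) / (a * d))"

definition Q2 :: "real \<Rightarrow> real \<Rightarrow> real \<Rightarrow> real \<Rightarrow> real \<Rightarrow> real" where
  "Q2 a b c d Pmax = (let \<beta> = b * (1 + d * Pmax) in
     (Re (csqrt (complex_of_real ((c - \<beta>) * (c - \<beta> + a * c * Pmax)))) - \<beta>) / (c * b))"

end

theory Submission
  imports Defs
begin

lemma hmono:
  fixes k c d P x y :: real
  assumes "k>0" "c>0" "d>0" "P>0" "k*(1+c*P) \<le> d*(2+c*P)" "0\<le>x" "x\<le>y"
  shows "(1+k*y)/((1+d*y)*(1+c*P+d*y)) \<le> (1+k*x)/((1+d*x)*(1+c*P+d*x))"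
proof -
  have id: "(1+k*x)*((1+d*y)*(1+c*P+d*y)) - (1+k*y)*((1+d*x)*(1+c*P+d*x))
     = (y-x)*(d*(2+c*P) - k*(1+c*P) + d^2*(x+y) + k*d^2*x*y)"
    by (simp add: algebra_simps power2_eq_square)
  have "0 \<le> (y-x)*(d*(2+c*P) - k*(1+c*P) + d^2*(x+y) + k*d^2*x*y)"
    using assms by (intro mult_nonneg_nonneg) auto
  hence le: "(1+k*y)*((1+d*x)*(1+c*P+d*x)) \<le> (1+k*x)*((1+d*y)*(1+c*P+d*y))"
    using id by linarith
  have p1: "(1+d*y)*(1+c*P+d*y) > 0" "(1+d*x)*(1+c*P+d*x) > 0" using assms by (auto intro!: mult_pos_pos add_pos_nonneg)
  show ?thesis using le p1 by (simp add: divide_simps)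
qed

lemma Q1_cond:
  fixes a b c d P :: real
  assumes "a>0" "b>0" "c>0" "d>0" "P>0" "Q1 a b c d P \<le> 0"
  shows "(a/(1+b*P))*(1+c*P) \<le> d*(2+c*P)"
proof (rule ccontr)
  assume "\<not> ?thesis"
  moreover have "(a/(1+b*P))*(1+c*P) = a*(1+c*P)/(1+b*P)" by simp
  moreover have pb: "1+b*P > 0" using assms by (simp add: add_pos_pos)
  ultimately have "d*(2+c*P) < a*(1+c*P)/(1+b*P)" by simp
  hence "d*(2+c*P)*(1+b*P) < a*(1+c*P)" using pb by (simp add: less_divide_eq)
  hence h: "a*(1+c*P) > d*(1+b*P)*(2+c*P)" by (simp add: algebra_simps)
  define al where "al = d*(1+b*P)"
  have alp: "al > 0" using assms pb by (simp add: al_def)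
  define D where "D = (a - al)*(a - al + a*c*P)"
  have "D - al^2 = a*(a*(1+c*P) - al*(2+c*P))" by (simp add: D_def algebra_simps power2_eq_square)
  moreover have "a*(a*(1+c*P) - al*(2+c*P)) > 0" using h assms by (simp add: al_def)
  ultimately have Dg: "D > al^2" by linarith
  hence sq: "sqrt D > al" using alp real_less_rsqrt by blast
  have "D \<ge> 0" using Dg by (smt (verit) zero_le_power2)
  hence "Q1 a b c d P = (sqrt D - al)/(a*d)" unfolding Q1_def Let_def al_def[symmetric] D_def[symmetric] by (simp only: csqrt_of_real Re_complex_of_real)
  moreover have "(sqrt D - al)/(a*d) > 0" using sq assms by simp
  ultimately show False using assms by simp
qed

lemma gd: fixes c P d x :: real assumes "1+d*x>0" "c*P > 0"
  shows "((\<lambda>x. ln(1 + c*P/(1+d*x))) has_real_derivative (-(c*P*d)/((1+d*x)*(1+c*P+d*x)))) (at x)"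
proof -
  have p: "1 + c*P/(1+d*x) > 0" using assms by (simp add: add_pos_pos)
  have q: "1+c*P+d*x > 0" using assms by simp
    have r: "(1 + c*P/(1+d*x))*(1+d*x) = 1+c*P+d*x" using assms by (simp add: field_simps)
    show ?thesis using assms p q r apply (auto intro!: derivative_eq_intros)
    done
qed

lemma curve:
  fixes k c d P l1 x :: real
  assumes kp: "k>0" and cp: "c>0" and dp: "d>0" and Pp: "P>0" and l1: "l1>0"
    and cond: "k*(1+c*P) \<le> d*(2+c*P)"
    and endP: "ln(1+k*P)/l1 + ln(1+c*P/(1+d*P))/ln(1+c*P) \<le> 1"
    and x0: "0\<le>x" and xP: "x\<le>P"
  shows "ln(1+k*x)/l1 + ln(1+c*P/(1+d*x))/ln(1+c*P) \<le> 1"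
proof -
  define l2 where "l2 = ln(1+c*P)"
  have l2p: "l2 > 0" using mult_pos_pos[OF cp Pp] by (simp add: l2_def)
  define X where "X s = (exp s - 1)/k" for s
  define h where "h x = (1+k*x)/((1+d*x)*(1+c*P+d*x))" for x
  define F where "F s = s/l1 + ln(1 + c*P/(1+d*X s))/l2" for s
  define F' where "F' s = 1/l1 - (c*P*d/k) * h (X s)/l2" for s
  define S where "S = ln(1+k*P)"
  have Sp: "S > 0" using mult_pos_pos[OF kp Pp] by (simp add: S_def)
  have X0: "s \<ge> 0 \<Longrightarrow> X s \<ge> 0" for s using kp by (simp add: X_def)
  have Xmono: "s \<le> t \<Longrightarrow> X s \<le> X t" for s t using kp by (simp add: X_def divide_right_mono)
  have der: "(F has_real_derivative F' s) (at s)" if "s \<in> {0..S}" for s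
  proof -
    have xs: "X s \<ge> 0" using that X0 by simp
    have e: "exp s = 1 + k * X s" using kp by (simp add: X_def)
    have p1: "1 + d * X s > 0" using xs dp by (simp add: add_pos_nonneg)
    have p2: "1 + c*P + d * X s > 0" using xs dp cp Pp by (simp add: add_pos_nonneg)
    define gv where "gv = -(c*P*d)/((1+d*X s)*(1+c*P+d*X s))"
    have g: "((\<lambda>x. ln(1 + c*P/(1+d*x))) has_real_derivative gv) (at (X s))"
      unfolding gv_def by (rule gd) (use p1 cp Pp in auto)
    have Xd: "(X has_real_derivative exp s / k) (at s)" unfolding X_def
      using kp by (auto intro!: derivative_eq_intros)
    have c: "((\<lambda>s. ln(1+c*P/(1+d*X s))) has_real_derivative gv*(exp s/k)) (at s)"
      by (rule DERIV_chain2[OF g Xd])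
    have "(F has_real_derivative 1/l1 + gv*(exp s/k)/l2) (at s)"
      unfolding F_def by (rule DERIV_add[OF DERIV_cdivide[OF DERIV_ident] DERIV_cdivide[OF c]])
    moreover have "1/l1 + gv*(exp s/k)/l2 = F' s"
      using kp unfolding F'_def h_def gv_def e by (simp add: field_simps)
    ultimately show ?thesis by simp
  qed
  have mono: "F' s \<le> F' t" if "s \<in> {0..S}" "t \<in> {0..S}" "s \<le> t" for s t
  proof -
    have "h (X t) \<le> h (X s)" unfolding h_def
      by (rule hmono[OF kp cp dp Pp cond]) (use that X0 Xmono in auto)
    moreover have "c*P*d/k > 0" using kp cp dp Pp by simp
    ultimately have "(c*P*d/k) * h (X t) \<le> (c*P*d/k) * h (X s)" by (meson less_imp_le mult_left_mono)
    hence "(c*P*d/k) * h (X t) / l2 \<le> (c*P*d/k) * h (X s) / l2" by (rule divide_right_mono[OF _ less_imp_le[OF l2p]])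
    thus ?thesis unfolding F'_def by linarith
  qed
  have cvx: "convex_on {0..S} F"
    by (rule convex_on_realI[OF _ der mono]) auto
  define s where "s = ln(1+k*x)"
  have s0: "s \<ge> 0" using kp x0 by (simp add: s_def)
  have "k*x \<le> k*P" using kp xP by simp
  hence sS: "s \<le> S" using kp x0 by (simp add: s_def S_def add_pos_nonneg)
  have Xs: "X s = x" using kp x0 by (simp add: s_def X_def add_pos_nonneg)
  define t where "t = s/S"
  have t01: "0 \<le> t" "t \<le> 1" using s0 sS Sp by (auto simp: t_def)
  have st: "s = (1-t)*0 + t*S" using Sp by (simp add: t_def)
  have "F s \<le> (1-t)*F 0 + t*F S"
    using convex_onD_Icc[OF cvx less_imp_le[OF Sp] t01] unfolding st by simp
  moreover have "F 0 = 1" using l2p by (simp add: F_def X_def l2_def)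
  moreover have "X S = P" using kp Pp by (simp add: S_def X_def add_pos_nonneg)
  hence "F S \<le> 1" using endP by (simp add: F_def S_def l2_def)
  moreover have "t * F S \<le> t * 1" by (rule mult_left_mono[OF \<open>F S \<le> 1\<close> t01(1)])
  ultimately have "F s \<le> 1" by simp
  thus ?thesis using Xs by (simp add: F_def s_def l2_def)
qed


lemma scale1:
  fixes a b p q t :: real
  assumes "a\<ge>0" "b\<ge>0" "p\<ge>0" "q\<ge>0" "t\<ge>1"
  shows "a*p/(1+b*q) \<le> a*(t*p)/(1+b*(t*q))"
proof -
  have p1: "1+b*q > 0" "1+b*(t*q) > 0" using assms by (auto intro!: add_pos_nonneg)
  have "a*p*(1+b*(t*q)) \<le> a*(t*p)*(1+b*q)"
  proof -
    have "a*p*1 \<le> a*p*t" using assms by (intro mult_left_mono) auto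
    thus ?thesis by (simp add: algebra_simps)
  qed
  thus ?thesis using p1 by (simp add: divide_simps)
qed

lemma half:
  fixes a b c d P P1 P2 :: real
  assumes ap: "a>0" and bp: "b>0" and cp: "c>0" and dp: "d>0" and Pp: "P>0"
    and cond: "(a/(1+b*P))*(1+c*P) \<le> d*(2+c*P)"
    and E: "ln(1+a*P/(1+b*P))/ln(1+a*P) + ln(1+c*P/(1+d*P))/ln(1+c*P) \<le> 1"
    and h: "0 \<le> P1" "P1 \<le> P2" "P2 \<le> P"
  shows "ln(1+a*P1/(1+b*P2))/ln(1+a*P) + ln(1+c*P2/(1+d*P1))/ln(1+c*P) \<le> 1"
proof (cases "P2 = 0")
  case True
  then show ?thesis using h by simp
next
  case False
  hence P2p: "P2 > 0" using h by simp
  define t where "t = P/P2"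
  have t1: "t \<ge> 1" using P2p h by (simp add: t_def)
  have tP2: "t*P2 = P" using P2p by (simp add: t_def)
  define x where "x = t*P1"
  have x0: "x \<ge> 0" using t1 h by (simp add: x_def)
  have xP: "x \<le> P" using t1 h tP2 unfolding x_def by (metis mult_left_mono order_trans zero_le_one)
  have L1p: "ln(1+a*P) > 0" using mult_pos_pos[OF ap Pp] by simp
  have L2p: "ln(1+c*P) > 0" using mult_pos_pos[OF cp Pp] by simp
  have s1: "a*P1/(1+b*P2) \<le> a*x/(1+b*P)"
    using scale1[of a b P1 P2 t] ap bp h t1 tP2 by (simp add: x_def)
  have s2: "c*P2/(1+d*P1) \<le> c*P/(1+d*x)"
  proof -
    have q: "1+d*P1 > 0" "1+d*x > 0" using dp h x0 by (auto intro!: add_pos_nonneg)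
    have "c*P2*(1+d*x) \<le> c*P*(1+d*P1)"
    proof -
      have "c*P2*(1+d*x) = c*P2 + c*d*P*P1" using tP2 by (simp add: x_def algebra_simps)
      moreover have "c*P*(1+d*P1) = c*P + c*d*P*P1" by (simp add: algebra_simps)
      moreover have "c*P2 \<le> c*P" using cp h by simp
      ultimately show ?thesis by simp
    qed
    thus ?thesis using q by (simp add: divide_simps)
  qed
  have n1: "0 \<le> a*P1/(1+b*P2)" using ap bp h by (simp add: add_pos_nonneg)
  have n2: "0 \<le> c*P2/(1+d*P1)" using cp dp h by (simp add: add_pos_nonneg)
  have l1: "ln(1+a*P1/(1+b*P2)) \<le> ln(1+a*x/(1+b*P))" using s1 n1 by simp
  have l2: "ln(1+c*P2/(1+d*P1)) \<le> ln(1+c*P/(1+d*x))" using s2 n2 by simp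
  have kp: "a/(1+b*P) > 0" using ap bp Pp by (simp add: add_pos_pos)
  have cur: "ln(1+(a/(1+b*P))*x)/ln(1+a*P) + ln(1+c*P/(1+d*x))/ln(1+c*P) \<le> 1"
    by (rule curve[OF kp cp dp Pp L1p cond _ x0 xP]) (use E in simp)
  have "ln(1+a*P1/(1+b*P2))/ln(1+a*P) \<le> ln(1+a*x/(1+b*P))/ln(1+a*P)"
    using l1 L1p by (simp add: divide_right_mono)
  moreover have "ln(1+c*P2/(1+d*P1))/ln(1+c*P) \<le> ln(1+c*P/(1+d*x))/ln(1+c*P)"
    using l2 L2p by (simp add: divide_right_mono)
  ultimately show ?thesis using cur by simp
qed


lemma main_bound:
  fixes a b c d P P1 P2 :: real
  assumes ap: "a>0" and bp: "b>0" and cp: "c>0" and dp: "d>0" and Pp: "P>0"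
    and c1: "(a/(1+b*P))*(1+c*P) \<le> d*(2+c*P)"
    and c2: "(c/(1+d*P))*(1+a*P) \<le> b*(2+a*P)"
    and E: "ln(1+a*P/(1+b*P))/ln(1+a*P) + ln(1+c*P/(1+d*P))/ln(1+c*P) \<le> 1"
    and h: "0 \<le> P1" "P1 \<le> P" "0 \<le> P2" "P2 \<le> P"
  shows "ln(1+a*P1/(1+b*P2))/ln(1+a*P) + ln(1+c*P2/(1+d*P1))/ln(1+c*P) \<le> 1"
proof (cases "P1 \<le> P2")
  case True
  then show ?thesis using half[OF ap bp cp dp Pp c1 E] h by simp
next
  case False
  have "ln(1+c*P2/(1+d*P1))/ln(1+c*P) + ln(1+a*P1/(1+b*P2))/ln(1+a*P) \<le> 1"
    by (rule half[OF cp dp ap bp Pp c2]) (use E False h in auto)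
  then show ?thesis by simp
qed

theorem lemma2:
  fixes a b c d Pmax :: real
  assumes "a > 0" "b > 0" "c > 0" "d > 0" "Pmax > 0"
    and "Q1 a b c d Pmax \<le> 0" "Q2 a b c d Pmax \<le> 0"
  defines "A \<equiv> (0::real, log 2 (1 + c * Pmax))"
    and "C \<equiv> (log 2 (1 + a * Pmax), 0::real)"
    and "\<gamma> \<equiv> log 2 (1 + c * Pmax) / log 2 (1 + a * Pmax)"
    and "B \<equiv> (R1 a b c d Pmax Pmax, R2 a b c d Pmax Pmax)"
  shows "((1 + c * Pmax) * (1 + d * Pmax) / (1 + c * Pmax + d * Pmax)
            \<ge> ((1 + a * Pmax + b * Pmax) / (1 + b * Pmax)) powr \<gamma>
          \<longrightarrow> convex hull (rate_region a b c d Pmax) = convex hull {(0, 0), A, C})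
       \<and> (((1 + c * Pmax) * (1 + d * Pmax) / (1 + c * Pmax + d * Pmax)
            \<ge> ((1 + a * Pmax + b * Pmax) / (1 + b * Pmax)) powr \<gamma>)
          \<longleftrightarrow> fst B / fst C + snd B / snd A \<le> 1)"
proof -
  note ap = assms(1) and bp = assms(2) and cp = assms(3) and dp = assms(4) and Pp = assms(5)
  define P where "P = Pmax"
  have PP: "P > 0" using Pp by (simp add: P_def)
  define L1 where "L1 = ln(1+a*P)"
  define L2 where "L2 = ln(1+c*P)"
  have L1p: "L1 > 0" using mult_pos_pos[OF ap PP] by (simp add: L1_def)
  have L2p: "L2 > 0" using mult_pos_pos[OF cp PP] by (simp add: L2_def)
  have bP: "1+b*P > 0" "1+d*P > 0" using bp dp PP by (auto intro!: add_pos_pos)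
  define Y where "Y = (1 + a*P + b*P)/(1+b*P)"
  have Yeq: "Y = 1 + a*P/(1+b*P)" using bP by (simp add: Y_def field_simps)
  have Yp: "Y > 0" using Yeq ap PP bP by (simp add: add_pos_pos)
  define r2 where "r2 = ln(1+c*P/(1+d*P))"
  define X where "X = (1 + c*P)*(1+d*P)/(1+c*P+d*P)"
  have Xeq: "X = (1+c*P)/(1+c*P/(1+d*P))" using bP by (simp add: X_def field_simps)
  have q1: "1+c*P > 0" "1+c*P/(1+d*P) > 0" using cp PP bP by (auto intro!: add_pos_pos)
  have lnX: "ln X = L2 - r2" unfolding Xeq L2_def r2_def using q1 by (simp add: ln_div)
  have Xp: "X > 0" using Xeq q1 by simp
  have gam: "\<gamma> = L2/L1" by (simp add: \<gamma>_def log_def L1_def L2_def P_def)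
  have fB: "fst B / fst C = ln Y / L1"
    by (simp add: B_def C_def R1_def log_def Yeq L1_def P_def)
  have sB: "snd B / snd A = r2 / L2"
    by (simp add: B_def A_def R2_def log_def r2_def L2_def P_def)
  have iff: "(X \<ge> Y powr \<gamma>) \<longleftrightarrow> ln Y / L1 + r2 / L2 \<le> 1"
  proof -
    have "Y powr \<gamma> > 0" using Yp by simp
    hence "(X \<ge> Y powr \<gamma>) \<longleftrightarrow> ln (Y powr \<gamma>) \<le> ln X"
      using Xp by (metis ln_le_cancel_iff)
    also have "\<dots> \<longleftrightarrow> (L2/L1) * ln Y \<le> L2 - r2" using Yp by (simp add: ln_powr gam lnX)
    also have "\<dots> \<longleftrightarrow> ln Y / L1 + r2 / L2 \<le> 1"
      using L1p L2p by (simp add: field_simps)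
    finally show ?thesis .
  qed
  have part2: "(X \<ge> Y powr \<gamma>) \<longleftrightarrow> fst B / fst C + snd B / snd A \<le> 1"
    using iff fB sB by simp
  have part1: "convex hull (rate_region a b c d Pmax) = convex hull {(0, 0), A, C}"
    if cnd: "X \<ge> Y powr \<gamma>"
  proof -
    have E: "ln(1+a*P/(1+b*P))/ln(1+a*P) + ln(1+c*P/(1+d*P))/ln(1+c*P) \<le> 1"
      using iff cnd by (simp add: Yeq r2_def L1_def L2_def)
    have c1: "(a/(1+b*P))*(1+c*P) \<le> d*(2+c*P)"
      using Q1_cond[OF ap bp cp dp PP] assms(6) by (simp add: P_def)
    have "Q1 c d a b P \<le> 0" using assms(7)
      by (simp add: Q1_def Q2_def P_def Let_def mult.commute mult.left_commute)
    hence c2: "(c/(1+d*P))*(1+a*P) \<le> b*(2+a*P)"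
      using Q1_cond[OF cp dp ap bp PP] by simp
    define T where "T = {(r1,r2). 0 \<le> r1 \<and> 0 \<le> r2 \<and> r1*ln 2/L1 + r2*ln 2/L2 \<le> 1}"
    have sub1: "rate_region a b c d Pmax \<subseteq> T"
    proof
      fix z assume "z \<in> rate_region a b c d Pmax"
      then obtain r1 r2 P1 P2 where z: "z = (r1,r2)" and r: "0 \<le> r1" "0 \<le> r2"
        "0 \<le> P1" "P1 \<le> P" "0 \<le> P2" "P2 \<le> P"
        "r1 \<le> R1 a b c d P1 P2" "r2 \<le> R2 a b c d P1 P2"
        unfolding rate_region_def P_def by blast
      have mb: "ln(1+a*P1/(1+b*P2))/L1 + ln(1+c*P2/(1+d*P1))/L2 \<le> 1"
        unfolding L1_def L2_def by (rule main_bound[OF ap bp cp dp PP c1 c2 E]) (use r in auto)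
      have "r1 * ln 2 \<le> ln(1+a*P1/(1+b*P2))" using r(7) by (simp add: R1_def log_def divide_simps)
      hence e1: "r1*ln 2/L1 \<le> ln(1+a*P1/(1+b*P2))/L1" using L1p by (simp add: divide_right_mono)
      have "r2 * ln 2 \<le> ln(1+c*P2/(1+d*P1))" using r(8) by (simp add: R2_def log_def divide_simps)
      hence e2: "r2*ln 2/L2 \<le> ln(1+c*P2/(1+d*P1))/L2" using L2p by (simp add: divide_right_mono)
      show "z \<in> T" unfolding T_def z using r(1,2) e1 e2 mb by simp
    qed
    have sub2: "T \<subseteq> convex hull {(0, 0), A, C}"
    proof
      fix z assume "z \<in> T"
      then obtain r1 r2 where z: "z = (r1,r2)" and r: "0 \<le> r1" "0 \<le> r2" "r1*ln 2/L1 + r2*ln 2/L2 \<le> 1"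
        unfolding T_def by blast
      define u where "u = r1*ln 2/L1"
      define v where "v = r2*ln 2/L2"
      have uv: "0 \<le> u" "0 \<le> v" "0 \<le> 1-u-v" using r L1p L2p by (auto simp: u_def v_def)
      have zeq: "z = (1-u-v) *\<^sub>R (0,0) + v *\<^sub>R A + u *\<^sub>R C"
        using L1p L2p unfolding z A_def C_def u_def v_def by (simp add: log_def L1_def L2_def P_def)
      have "\<exists>u' v' w'. z = u' *\<^sub>R (0,0) + v' *\<^sub>R A + w' *\<^sub>R C \<and> 0 \<le> u' \<and> 0 \<le> v' \<and> 0 \<le> w' \<and> u' + v' + w' = 1"
        by (rule exI[of _ "1-u-v"], rule exI[of _ v], rule exI[of _ u]) (use zeq uv in simp)
      thus "z \<in> convex hull {(0, 0), A, C}" unfolding convex_hull_3 by blast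
    qed
    have sub3: "{(0, 0), A, C} \<subseteq> rate_region a b c d Pmax"
    proof -
      have "(0::real,0::real) \<in> rate_region a b c d Pmax"
        unfolding rate_region_def R1_def R2_def using Pp by force
      moreover have "A \<in> rate_region a b c d Pmax"
      proof -
        have "0 \<le> log 2 (1 + c*Pmax)" using mult_pos_pos[OF cp Pp] by simp
        hence "\<exists>P1 P2. 0 \<le> P1 \<and> P1 \<le> Pmax \<and> 0 \<le> P2 \<and> P2 \<le> Pmax \<and>
          0 \<le> R1 a b c d P1 P2 \<and> log 2 (1 + c*Pmax) \<le> R2 a b c d P1 P2"
          by (rule_tac exI[of _ 0], rule_tac exI[of _ Pmax]) (use Pp in \<open>simp add: R1_def R2_def\<close>)
        thus ?thesis unfolding rate_region_def A_def using \<open>0 \<le> log 2 (1 + c*Pmax)\<close> by simp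
      qed
      moreover have "C \<in> rate_region a b c d Pmax"
      proof -
        have "0 \<le> log 2 (1 + a*Pmax)" using mult_pos_pos[OF ap Pp] by simp
        hence "\<exists>P1 P2. 0 \<le> P1 \<and> P1 \<le> Pmax \<and> 0 \<le> P2 \<and> P2 \<le> Pmax \<and>
          log 2 (1 + a*Pmax) \<le> R1 a b c d P1 P2 \<and> 0 \<le> R2 a b c d P1 P2"
          by (rule_tac exI[of _ Pmax], rule_tac exI[of _ 0]) (use Pp in \<open>simp add: R1_def R2_def\<close>)
        thus ?thesis unfolding rate_region_def C_def using \<open>0 \<le> log 2 (1 + a*Pmax)\<close> by simp
      qed
      ultimately show ?thesis by blast
    qed
    show ?thesis
    proof
      show "convex hull rate_region a b c d Pmax \<subseteq> convex hull {(0, 0), A, C}"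
        by (rule hull_minimal) (use sub1 sub2 convex_convex_hull in auto)
      show "convex hull {(0, 0), A, C} \<subseteq> convex hull rate_region a b c d Pmax"
        by (rule hull_mono[OF sub3])
    qed
  qed
  show ?thesis using part1 part2 unfolding X_def Y_def P_def by blast
qed

end
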